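(* Let $f\in\mathscr{L}^r$ be a Lorenz expanding map. Then $f$ is eventually onto: for every open interval $J\subset[-1,1]\setminus\{0\}$ there is an integer $N>0$ such that $\bigcup_{i=0}^N f^i(J)=(-1,1)$ (where $f^i(J)$ denotes the image under $f^i$ of the set of points of $J$ at which $f^i$ is defined).
   Context: For $r\ge1$, $\mathscr{L}^r$ is the set of $C^r$ maps $f:[-1,1]\setminus\{0\}\to(-1,1)$ such that $\lim_{x\to0^-}f(x)=1$, $\lim_{x\to0^-}f'(x)=+\infty$, $\lim_{x\to0^+}f(x)=-1$, $\lim_{x\to0^+}f'(x)=+\infty$, and $-1<f(x)<1$, $f'(x)>\sqrt2$ for all $x\in[-1,1]\setminus\{0\}$. Such $f$ is called a Lorenz expanding map. The iterate $f^n$ is defined at $x$ if $f^m(x)\neq0$ for all $0\le m<n$. *)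

theory Defs
  imports "HOL-Analysis.Analysis"
begin

definition lorenz_dom :: "real set" where
  "lorenz_dom = {-1..1} - {0}"

text \<open>C^r on a set S (one-sided derivatives at boundary points): there is a family of
  functions D 0 = f, D 1, ..., D r with D (k+1) the derivative of D k within S for k < r,
  and D r continuous on S.\<close>
definition Cr_on :: "nat \<Rightarrow> real set \<Rightarrow> (real \<Rightarrow> real) \<Rightarrow> bool" where
  "Cr_on r S f \<longleftrightarrow> (\<exists>D :: nat \<Rightarrow> real \<Rightarrow> real.
      (\<forall>x\<in>S. D 0 x = f x) \<and>
      (\<forall>k<r. \<forall>x\<in>S. (D k has_real_derivative D (Suc k) x) (at x within S)) \<and>
      continuous_on S (D r))"

definition lorenz_expanding :: "nat \<Rightarrow> (real \<Rightarrow> real) \<Rightarrow> bool" where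
  "lorenz_expanding r f \<longleftrightarrow> 1 \<le> r \<and> Cr_on r lorenz_dom f \<and>
     (\<exists>f'. (\<forall>x\<in>lorenz_dom. (f has_real_derivative f' x) (at x within lorenz_dom)) \<and>
       (f \<longlongrightarrow> 1) (at_left 0) \<and> filterlim f' at_top (at_left 0) \<and>
       (f \<longlongrightarrow> -1) (at_right 0) \<and> filterlim f' at_top (at_right 0) \<and>
       (\<forall>x\<in>lorenz_dom. -1 < f x \<and> f x < 1 \<and> f' x > sqrt 2))"

definition iter_defined :: "(real \<Rightarrow> real) \<Rightarrow> nat \<Rightarrow> real \<Rightarrow> bool" where
  "iter_defined f n x \<longleftrightarrow> (\<forall>m<n. (f ^^ m) x \<noteq> 0)"

definition iter_image :: "(real \<Rightarrow> real) \<Rightarrow> nat \<Rightarrow> real set \<Rightarrow> real set" where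
  "iter_image f n J = (f ^^ n) ` {x \<in> J. iter_defined f n x}"

end

theory Submission imports Defs begin


locale lz =
  fixes f :: "real \<Rightarrow> real" and f' :: "real \<Rightarrow> real" and \<mu> :: real
  assumes deriv: "\<And>x. x \<in> lorenz_dom \<Longrightarrow> (f has_real_derivative f' x) (at x within lorenz_dom)"
    and limL: "(f \<longlongrightarrow> 1) (at_left 0)" and limR: "(f \<longlongrightarrow> -1) (at_right 0)"
    and rng: "\<And>x. x \<in> lorenz_dom \<Longrightarrow> -1 < f x \<and> f x < 1"
    and mu: "\<mu> > sqrt 2" and fmu: "\<And>x. x \<in> lorenz_dom \<Longrightarrow> f' x \<ge> \<mu>"
begin

lemma mu1: "\<mu> > 1"
  using mu by (smt (verit) real_sqrt_gt_1_iff)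

lemma mu2: "\<mu>^2 > 2"
  using mu by (smt (verit, best) power_strict_mono real_sqrt_ge_zero real_sqrt_pow2 zero_less_numeral)

lemma deriv_at: assumes "x \<in> lorenz_dom" "x \<noteq> 1" "x \<noteq> -1"
  shows "(f has_real_derivative f' x) (at x)"
proof -
  have x: "-1 < x" "x < 1" "x \<noteq> 0" using assms by (auto simp: lorenz_dom_def)
  show ?thesis
  proof (cases "x > 0")
    case True
    have s: "{0<..<1} \<subseteq> lorenz_dom" by (auto simp: lorenz_dom_def)
    have "(f has_real_derivative f' x) (at x within {0<..<1})"
      using DERIV_subset[OF deriv[OF assms(1)] s] .
    moreover have "at x within {0<..<1} = at x" using True x by (intro at_within_open) auto
    ultimately show ?thesis by simp
  next
    case False
    have s: "{-1<..<0} \<subseteq> lorenz_dom" by (auto simp: lorenz_dom_def)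
    have "(f has_real_derivative f' x) (at x within {-1<..<0})"
      using DERIV_subset[OF deriv[OF assms(1)] s] .
    moreover have "at x within {-1<..<0} = at x" using False x by (intro at_within_open) auto
    ultimately show ?thesis by simp
  qed
qed

lemma cont_within: assumes "x \<in> lorenz_dom" shows "(f \<longlongrightarrow> f x) (at x within lorenz_dom)"
  using DERIV_continuous[OF deriv[OF assms]] by (simp add: continuous_within)

definition fR where "fR x = (if x = 0 then -1 else f x)"
definition fL where "fL x = (if x = 0 then 1 else f x)"

lemma contR: "continuous_on {0..1} fR"
proof (rule continuous_on_IccI)
  have ev: "\<forall>\<^sub>F x in at_right 0. f x = fR x"
    by (simp add: eventually_at_filter fR_def)
  show "(fR \<longlongrightarrow> fR 0) (at_right 0)" using limR tendsto_cong[OF ev] by (simp add: fR_def[abs_def])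
  have "(f \<longlongrightarrow> f 1) (at 1 within {1/2..1})"
    by (rule tendsto_within_subset[OF cont_within]) (auto simp: lorenz_dom_def)
  then have "(f \<longlongrightarrow> f 1) (at_left 1)" by (simp add: at_within_Icc_at_left)
  moreover have "\<forall>\<^sub>F x in at_left 1. f x = fR x"
    using eventually_at_left_real[of 0 "1::real", simplified] by (rule eventually_mono) (auto simp: fR_def)
  ultimately show "(fR \<longlongrightarrow> fR 1) (at_left 1)" by (auto simp: fR_def[abs_def] tendsto_cong)
  fix x :: real assume x: "0 < x" "x < 1"
  have "isCont f x" using deriv_at[of x] x DERIV_isCont by (auto simp: lorenz_dom_def)
  then have "(f \<longlongrightarrow> fR x) (at x)" using x by (simp add: isCont_def fR_def)
  moreover have "\<forall>\<^sub>F y in at x. f y = fR y"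
    using eventually_at_ball[of x x UNIV, OF x(1)] by (rule eventually_mono) (auto simp: fR_def dist_real_def)
  ultimately show "(fR \<longlongrightarrow> fR x) (at x)" by (simp add: tendsto_cong)
qed simp

lemma contL: "continuous_on {-1..0} fL"
proof (rule continuous_on_IccI)
  have ev: "\<forall>\<^sub>F x in at_left 0. f x = fL x"
    by (simp add: eventually_at_filter fL_def)
  show "(fL \<longlongrightarrow> fL 0) (at_left 0)" using limL tendsto_cong[OF ev] by (simp add: fL_def[abs_def])
  have "(f \<longlongrightarrow> f (-1)) (at (-1) within {-1..-1/2})"
    by (rule tendsto_within_subset[OF cont_within]) (auto simp: lorenz_dom_def)
  then have "(f \<longlongrightarrow> f (-1)) (at_right (-1))" by (simp add: at_within_Icc_at_right)
  moreover have "\<forall>\<^sub>F x in at_right (-1). f x = fL x"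
    using eventually_at_right_real[of "-1" "0::real", simplified] by (rule eventually_mono) (auto simp: fL_def)
  ultimately show "(fL \<longlongrightarrow> fL (-1)) (at_right (-1))" by (auto simp: fL_def[abs_def] tendsto_cong)
  fix x :: real assume x: "-1 < x" "x < 0"
  have "isCont f x" using deriv_at[of x] x DERIV_isCont by (auto simp: lorenz_dom_def)
  then have "(f \<longlongrightarrow> fL x) (at x)" using x by (simp add: isCont_def fL_def)
  moreover have "\<forall>\<^sub>F y in at x. f y = fL y"
  proof -
    have "0 < -x" using x by simp
    from eventually_at_ball[OF this, of x UNIV] show ?thesis
      by (rule eventually_mono) (auto simp: fL_def dist_real_def)
  qed
  ultimately show "(fL \<longlongrightarrow> fL x) (at x)" by (simp add: tendsto_cong)
qed simp


lemma gen_interval: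
  fixes g g' :: "real \<Rightarrow> real"
  assumes cd: "c < d" and cont: "continuous_on {c..d} g"
    and der: "\<And>x. c < x \<Longrightarrow> x < d \<Longrightarrow> (g has_real_derivative g' x) (at x)"
    and ge: "\<And>x. c < x \<Longrightarrow> x < d \<Longrightarrow> g' x \<ge> \<mu>"
  shows "g d - g c \<ge> \<mu> * (d - c)" and "{g c<..<g d} \<subseteq> g ` {c<..<d}"
proof -
  obtain l z where z: "c < z" "z < d" "DERIV g z :> l" "g d - g c = (d - c) * l"
    using MVT[OF cd cont] der by (meson real_differentiable_def)
  have "l = g' z" using DERIV_unique[OF z(3) der[OF z(1,2)]] .
  then have "l \<ge> \<mu>" using ge z by simp
  then show "g d - g c \<ge> \<mu> * (d - c)" using z(4) cd by (simp add: mult.commute mult_right_mono)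
  show "{g c<..<g d} \<subseteq> g ` {c<..<d}"
  proof
    fix y assume y: "y \<in> {g c<..<g d}"
    obtain x where x: "c \<le> x" "x \<le> d" "g x = y" using IVT'[of g c y d] y cd cont by auto
    then have "x \<noteq> c" "x \<noteq> d" using y by auto
    with x show "y \<in> g ` {c<..<d}" by force
  qed
qed

lemma dom_iff: "x \<in> lorenz_dom \<longleftrightarrow> -1 \<le> x \<and> x \<le> 1 \<and> x \<noteq> 0"
  by (auto simp: lorenz_dom_def)

lemma IntR:
  assumes "0 \<le> c" "c < d" "d \<le> 1"
  shows "f d - fR c \<ge> \<mu> * (d - c)" and "{fR c<..<f d} \<subseteq> f ` {c<..<d}"
proof -
  have cont: "continuous_on {c..d} fR" by (rule continuous_on_subset[OF contR]) (use assms in auto)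
  have der: "(fR has_real_derivative f' x) (at x)" if "c < x" "x < d" for x
  proof (rule has_field_derivative_transform_within_open[of f _ _ "{0<..<1}"])
    show "(f has_real_derivative f' x) (at x)" using that assms by (intro deriv_at) (auto simp: dom_iff)
  qed (use that assms in \<open>auto simp: fR_def\<close>)
  have ge: "f' x \<ge> \<mu>" if "c < x" "x < d" for x using that assms by (intro fmu) (auto simp: dom_iff)
  have fd: "fR d = f d" using assms by (simp add: fR_def)
  show "f d - fR c \<ge> \<mu> * (d - c)" using gen_interval(1)[OF assms(2) cont der ge] fd by simp
  have "{fR c<..<f d} \<subseteq> fR ` {c<..<d}" using gen_interval(2)[OF assms(2) cont der ge] fd by simp
  also have "fR ` {c<..<d} = f ` {c<..<d}" using assms by (intro image_cong) (auto simp: fR_def)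
  finally show "{fR c<..<f d} \<subseteq> f ` {c<..<d}" .
qed

lemma IntL:
  assumes "-1 \<le> c" "c < d" "d \<le> 0"
  shows "fL d - f c \<ge> \<mu> * (d - c)" and "{f c<..<fL d} \<subseteq> f ` {c<..<d}"
proof -
  have cont: "continuous_on {c..d} fL" by (rule continuous_on_subset[OF contL]) (use assms in auto)
  have der: "(fL has_real_derivative f' x) (at x)" if "c < x" "x < d" for x
  proof (rule has_field_derivative_transform_within_open[of f _ _ "{-1<..<0}"])
    show "(f has_real_derivative f' x) (at x)" using that assms by (intro deriv_at) (auto simp: dom_iff)
  qed (use that assms in \<open>auto simp: fL_def\<close>)
  have ge: "f' x \<ge> \<mu>" if "c < x" "x < d" for x using that assms by (intro fmu) (auto simp: dom_iff)
  have fc: "fL c = f c" using assms by (simp add: fL_def)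
  show "fL d - f c \<ge> \<mu> * (d - c)" using gen_interval(1)[OF assms(2) cont der ge] fc by simp
  have "{f c<..<fL d} \<subseteq> fL ` {c<..<d}" using gen_interval(2)[OF assms(2) cont der ge] fc by simp
  also have "fL ` {c<..<d} = f ` {c<..<d}" using assms by (intro image_cong) (auto simp: fL_def)
  finally show "{f c<..<fL d} \<subseteq> f ` {c<..<d}" .
qed

lemma fR_range: "0 \<le> c \<Longrightarrow> c \<le> 1 \<Longrightarrow> -1 \<le> fR c \<and> fR c < 1"
  using rng[of c] by (auto simp: fR_def dom_iff)
lemma fL_range: "-1 \<le> c \<Longrightarrow> c \<le> 0 \<Longrightarrow> -1 < fL c \<and> fL c \<le> 1"
  using rng[of c] by (auto simp: fL_def dom_iff)


definition IM where "IM a b n = iter_image f n {a<..<b}"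
definition \<kappa> where "\<kappa> = min \<mu> (\<mu>^2/2)"

lemma kappa: "\<kappa> > 1" "\<kappa> \<le> \<mu>" "\<kappa> \<le> \<mu>^2/2"
  using mu1 mu2 by (auto simp: \<kappa>_def)

lemma iter_range:
  assumes ab: "-1 \<le> a" "b \<le> 1" and x: "x \<in> {a<..<b}" and def: "iter_defined f n x"
  shows "m \<le> n \<Longrightarrow> (f ^^ m) x \<in> {-1<..<1}"
proof (induction m)
  case 0 then show ?case using ab x by auto
next
  case (Suc m)
  then have "(f ^^ m) x \<in> {-1<..<1}" "(f ^^ m) x \<noteq> 0" using def by (auto simp: iter_defined_def)
  then have "(f ^^ m) x \<in> lorenz_dom" by (auto simp: dom_iff)
  then show ?case using rng by simp
qed

lemma IM_sub: "-1 \<le> a \<Longrightarrow> b \<le> 1 \<Longrightarrow> IM a b n \<subseteq> {-1<..<1}"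
  unfolding IM_def iter_image_def using iter_range by blast

lemma IM_step: assumes "S \<subseteq> IM a b n" shows "f ` (S - {0}) \<subseteq> IM a b (Suc n)"
proof
  fix y assume "y \<in> f ` (S - {0})"
  then obtain z where z: "z \<in> S" "z \<noteq> 0" "y = f z" by auto
  then obtain x where x: "x \<in> {a<..<b}" "iter_defined f n x" "z = (f ^^ n) x"
    using assms by (auto simp: IM_def iter_image_def)
  have "iter_defined f (Suc n) x" using x z by (auto simp: iter_defined_def less_Suc_eq)
  moreover have "y = (f ^^ Suc n) x" using x z by simp
  ultimately show "y \<in> IM a b (Suc n)" using x by (auto simp: IM_def iter_image_def)
qed


abbreviation GOAL where "GOAL a b \<equiv> (\<exists>N. {-1<..<1} \<subseteq> (\<Union>i\<in>{0..N}. IM a b i))"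

abbreviation GOODI where "GOODI a b n c d \<equiv> -1 \<le> c \<and> c < d \<and> d \<le> 1 \<and> {c<..<d} \<subseteq> IM a b n"

lemma goal2:
  assumes "A \<subseteq> IM a b n" "B \<subseteq> IM a b m" "{-1<..<1} \<subseteq> A \<union> B"
  shows "GOAL a b"
proof
  show "{-1<..<1} \<subseteq> (\<Union>i\<in>{0..max n m}. IM a b i)" using assms by fastforce
qed

lemma step:
  assumes G: "GOODI a b n c d"
  shows "GOAL a b \<or> (\<exists>n' c' d'. GOODI a b n' c' d' \<and> d' - c' \<ge> \<kappa> * (d - c))"
proof -
  have sub: "{c<..<d} \<subseteq> IM a b n" using G by simp
  have img: "f ` ({c<..<d} - {0}) \<subseteq> IM a b (Suc n)" by (rule IM_step[OF sub])
  have cd: "c < d" using G by simp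
  consider "d \<le> 0" | "0 \<le> c" | "c < 0" "0 < d" by linarith
  then show ?thesis
  proof cases
    case 1
    have i1: "{f c<..<fL d} \<subseteq> IM a b (Suc n)"
      using IntL(2)[of c d] G 1 img by auto
    have l: "fL d - f c \<ge> \<mu> * (d - c)" using IntL(1)[of c d] G 1 by auto
    have "\<kappa> * (d - c) \<le> \<mu> * (d - c)" using kappa cd by (intro mult_right_mono) auto
    moreover have "-1 < f c" using rng[of c] G 1 by (auto simp: dom_iff)
    moreover have "fL d \<le> 1" using fL_range[of d] G 1 by auto
    moreover have "\<mu> * (d - c) > 0" using mu1 cd by simp
    ultimately show ?thesis using i1 l by (intro disjI2 exI[of _ "Suc n"] exI[of _ "f c"] exI[of _ "fL d"]) auto
  next
    case 2
    have i1: "{fR c<..<f d} \<subseteq> IM a b (Suc n)"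
      using IntR(2)[of c d] G 2 img by auto
    have l: "f d - fR c \<ge> \<mu> * (d - c)" using IntR(1)[of c d] G 2 by auto
    have "\<kappa> * (d - c) \<le> \<mu> * (d - c)" using kappa cd by (intro mult_right_mono) auto
    moreover have "f d < 1" using rng[of d] G 2 by (auto simp: dom_iff)
    moreover have "-1 \<le> fR c" using fR_range[of c] G 2 by auto
    moreover have "\<mu> * (d - c) > 0" using mu1 cd by simp
    ultimately show ?thesis using i1 l by (intro disjI2 exI[of _ "Suc n"] exI[of _ "fR c"] exI[of _ "f d"]) auto
  next
    case 3
    have "f ` {c<..<0} \<subseteq> f ` ({c<..<d} - {0})" using 3 by auto
    then have A: "{f c<..<1} \<subseteq> IM a b (Suc n)"
      using IntL(2)[of c 0] G 3 img by (auto simp: fL_def)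
    have lA: "1 - f c \<ge> \<mu> * (- c)" using IntL(1)[of c 0] G 3 by (auto simp: fL_def)
    have "f ` {0<..<d} \<subseteq> f ` ({c<..<d} - {0})" using 3 by auto
    then have B: "{-1<..<f d} \<subseteq> IM a b (Suc n)"
      using IntR(2)[of 0 d] G 3 img by (auto simp: fR_def)
    have lB: "f d + 1 \<ge> \<mu> * d" using IntR(1)[of 0 d] G 3 by (auto simp: fR_def)
    have fd1: "-1 < f d" "f d < 1" using rng[of d] G 3 by (auto simp: dom_iff)
    have fc1: "-1 < f c" "f c < 1" using rng[of c] G 3 by (auto simp: dom_iff)
    have fm1: "f (-1) < 0" "-1 < f (-1)"
      using IntL(1)[of "-1" 0] mu1 rng[of "-1"] by (auto simp: fL_def dom_iff)
    have fp1: "f 1 > 0" "f 1 < 1"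
      using IntR(1)[of 0 1] mu1 rng[of 1] by (auto simp: fR_def dom_iff)
    show ?thesis
    proof (cases "f d > 0")
      case True
      have "{-1<..<0} \<subseteq> IM a b (Suc n)" using B True by auto
      from IM_step[OF this] have "{f (-1)<..<1} \<subseteq> IM a b (Suc (Suc n))"
        using IntL(2)[of "-1" 0] by (auto simp: fL_def)
      moreover have "{-1<..<1} \<subseteq> {-1<..<f d} \<union> {f (-1)<..<1}" using True fm1 by force
      ultimately show ?thesis using B by (intro disjI1 goal2) auto
    next
      case F1: False
      show ?thesis
      proof (cases "f c < 0")
        case True
        have "{0<..<1} \<subseteq> IM a b (Suc n)" using A True by auto
        from IM_step[OF this] have "{-1<..<f 1} \<subseteq> IM a b (Suc (Suc n))"
          using IntR(2)[of 0 1] by (auto simp: fR_def)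
        moreover have "{-1<..<1} \<subseteq> {f c<..<1} \<union> {-1<..<f 1}" using True fp1 by force
        ultimately show ?thesis using A by (intro disjI1 goal2) auto
      next
        case F2: False
        show ?thesis
        proof (cases "d \<ge> -c")
          case True
          have "f ` ({-1<..<f d} - {0}) \<subseteq> IM a b (Suc (Suc n))" by (rule IM_step[OF B])
          then have i2: "{f (-1)<..<fL (f d)} \<subseteq> IM a b (Suc (Suc n))"
            using IntL(2)[of "-1" "f d"] fd1 F1 by auto
          have l2: "fL (f d) - f (-1) \<ge> \<mu> * (f d + 1)" using IntL(1)[of "-1" "f d"] fd1 F1 by auto
          have "\<mu> * (f d + 1) \<ge> \<mu> * (\<mu> * d)" using lB mu1 by (intro mult_left_mono) auto
          moreover have "\<mu> * (\<mu> * d) \<ge> (\<mu>^2/2) * (d - c)"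
            using True mu1 mult_nonneg_nonneg[of "\<mu>*\<mu>" "c+d"] by (simp add: power2_eq_square algebra_simps)
          moreover have "(\<mu>^2/2) * (d - c) \<ge> \<kappa> * (d - c)" using kappa cd by (intro mult_right_mono) auto
          moreover have "\<kappa> * (d - c) > 0" using kappa cd by simp
          moreover have "fL (f d) \<le> 1" using fL_range[of "f d"] fd1 F1 by auto
          ultimately show ?thesis using i2 l2 fm1
            by (intro disjI2 exI[of _ "Suc (Suc n)"] exI[of _ "f (-1)"] exI[of _ "fL (f d)"]) auto
        next
          case False
          have "f ` ({f c<..<1} - {0}) \<subseteq> IM a b (Suc (Suc n))" by (rule IM_step[OF A])
          then have i2: "{fR (f c)<..<f 1} \<subseteq> IM a b (Suc (Suc n))"
            using IntR(2)[of "f c" 1] fc1 F2 by auto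
          have l2: "f 1 - fR (f c) \<ge> \<mu> * (1 - f c)" using IntR(1)[of "f c" 1] fc1 F2 by auto
          have "\<mu> * (1 - f c) \<ge> \<mu> * (\<mu> * (-c))" using lA mu1 by (intro mult_left_mono) auto
          moreover have "\<mu> * (\<mu> * (-c)) \<ge> (\<mu>^2/2) * (d - c)"
            using False mu1 mult_nonneg_nonneg[of "\<mu>*\<mu>" "-c-d"] by (simp add: power2_eq_square algebra_simps)
          moreover have "(\<mu>^2/2) * (d - c) \<ge> \<kappa> * (d - c)" using kappa cd by (intro mult_right_mono) auto
          moreover have "\<kappa> * (d - c) > 0" using kappa cd by simp
          moreover have "-1 \<le> fR (f c)" using fR_range[of "f c"] fc1 F2 by auto
          ultimately show ?thesis using i2 l2 fp1
            by (intro disjI2 exI[of _ "Suc (Suc n)"] exI[of _ "fR (f c)"] exI[of _ "f 1"]) auto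
        qed
      qed
    qed
  qed
qed


lemma iterate: "\<forall>n c d. GOODI a b n c d \<and> d - c \<ge> 2 / \<kappa>^k \<longrightarrow> GOAL a b"
proof (induction k)
  case 0
  show ?case
  proof (intro allI impI)
    fix n :: nat and c d :: real assume h: "GOODI a b n c d \<and> d - c \<ge> 2 / \<kappa>^0"
    then have "c = -1" "d = 1" by auto
    then have "{-1<..<1} \<subseteq> (\<Union>i\<in>{0..n}. IM a b i)" using h by auto
    then show "GOAL a b" by blast
  qed
next
  case (Suc k)
  show ?case
  proof (intro allI impI)
    fix n :: nat and c d :: real assume h: "GOODI a b n c d \<and> d - c \<ge> 2 / \<kappa>^Suc k"
    from h have hg: "GOODI a b n c d" by simp
    from step[OF hg]
    consider "GOAL a b" | n' c' d' where "GOODI a b n' c' d'" "d' - c' \<ge> \<kappa> * (d - c)" by blast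
    then show "GOAL a b"
    proof cases
      case (2 n' c' d')
      have kp: "\<kappa> > 0" using kappa by simp
      have "2 / \<kappa>^k = \<kappa> * (2 / \<kappa>^Suc k)" using kp by (simp add: field_simps)
      also have "\<dots> \<le> \<kappa> * (d - c)" using h kp by (intro mult_left_mono) auto
      finally have "2 / \<kappa>^k \<le> d' - c'" using 2 by linarith
      then show ?thesis using Suc.IH 2(1) by blast
    qed
  qed
qed

lemma main_loc:
  assumes "-1 \<le> a" "a < b" "b \<le> 1"
  shows "GOAL a b"
proof -
  obtain k where k: "2 / (b - a) < \<kappa>^k" using real_arch_pow[OF kappa(1)] by blast
  have kp: "\<kappa>^k > 0" using kappa(1) by simp
  have "2 < \<kappa>^k * (b - a)" using k assms by (simp add: divide_simps)
  then have "2 / \<kappa>^k \<le> b - a" using kp by (simp add: divide_simps mult.commute)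
  moreover have "{a<..<b} \<subseteq> IM a b 0" by (auto simp: IM_def iter_image_def iter_defined_def)
  ultimately show ?thesis using iterate[of a b k] assms by blast
qed

end


lemma dom_nonbot: assumes "x \<in> lorenz_dom" shows "at x within lorenz_dom \<noteq> bot"
proof -
  have "x islimpt lorenz_dom"
  proof (cases "x > 0")
    case True
    then have "x islimpt {0<..(1::real)}" using assms by (auto simp: lorenz_dom_def)
    then show ?thesis by (rule islimpt_subset) (auto simp: lorenz_dom_def)
  next
    case False
    then have "x islimpt {-1..<(0::real)}" using assms by (auto simp: lorenz_dom_def)
    then show ?thesis by (rule islimpt_subset) (auto simp: lorenz_dom_def)
  qed
  then show ?thesis by (simp add: trivial_limit_within)
qed

lemma mu_exists:
  fixes f f' :: "real \<Rightarrow> real"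
  assumes r: "1 \<le> r" and cr: "Cr_on r lorenz_dom f"
    and deriv: "\<And>x. x \<in> lorenz_dom \<Longrightarrow> (f has_real_derivative f' x) (at x within lorenz_dom)"
    and fL: "filterlim f' at_top (at_left 0)" and fR: "filterlim f' at_top (at_right 0)"
    and gt: "\<And>x. x \<in> lorenz_dom \<Longrightarrow> f' x > sqrt 2"
  shows "\<exists>\<mu>>sqrt 2. \<forall>x\<in>lorenz_dom. f' x \<ge> \<mu>"
proof -
  obtain D where D0: "\<forall>x\<in>lorenz_dom. D 0 x = f x"
    and Dk: "\<forall>k<r. \<forall>x\<in>lorenz_dom. (D k has_real_derivative D (Suc k) x) (at x within lorenz_dom)"
    and Dc: "continuous_on lorenz_dom (D r)"
    using cr unfolding Cr_on_def by blast
  have eq: "f' x = D 1 x" if x: "x \<in> lorenz_dom" for x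
  proof -
    have "(D 0 has_real_derivative D 1 x) (at x within lorenz_dom)" using Dk r x by simp
    then have "(f has_real_derivative D 1 x) (at x within lorenz_dom)"
      by (rule has_field_derivative_transform_within[where d=1]) (use x D0 in auto)
    then show ?thesis using has_field_derivative_unique[OF deriv[OF x] _ dom_nonbot[OF x]] by simp
  qed
  have cont1: "continuous_on lorenz_dom (D 1)"
  proof (cases "r = 1")
    case True then show ?thesis using Dc by simp
  next
    case False
    then have "1 < r" using r by simp
    then have "\<forall>x\<in>lorenz_dom. (D 1 has_real_derivative D 2 x) (at x within lorenz_dom)"
      using Dk by (simp add: numeral_2_eq_2)
    then show ?thesis unfolding continuous_on_eq_continuous_within
      using DERIV_continuous by blast
  qed
  obtain b1 where b1: "b1 < 0" "\<forall>y>b1. y < 0 \<longrightarrow> 2 \<le> f' y"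
    using fL unfolding filterlim_at_top eventually_at_left_field by blast
  obtain b2 where b2: "b2 > 0" "\<forall>y>0. y < b2 \<longrightarrow> 2 \<le> f' y"
    using fR unfolding filterlim_at_top eventually_at_right_field by blast
  define \<delta> where "\<delta> = min (min (-b1) b2) (1/2)"
  have \<delta>: "0 < \<delta>" "\<delta> \<le> -b1" "\<delta> \<le> b2" "\<delta> \<le> 1/2" using b1 b2 by (auto simp: \<delta>_def)
  define K where "K = {-1..-\<delta>} \<union> {\<delta>..1}"
  have KD: "K \<subseteq> lorenz_dom" using \<delta> by (auto simp: K_def lorenz_dom_def)
  have "compact K" by (simp add: K_def compact_Un)
  moreover have "K \<noteq> {}" using \<delta> by (auto simp: K_def)
  moreover have "continuous_on K (D 1)" using continuous_on_subset[OF cont1 KD] .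
  ultimately obtain y where y: "y \<in> K" "\<forall>z\<in>K. D 1 y \<le> D 1 z"
    using continuous_attains_inf by blast
  have my: "D 1 y > sqrt 2" using gt[of y] eq[of y] y KD by auto
  have s2: "sqrt 2 < (2::real)" by (rule real_less_lsqrt) auto
  show ?thesis
  proof (intro exI[of _ "min 2 (D 1 y)"] conjI ballI)
    show "sqrt 2 < min 2 (D 1 y)" using my s2 by simp
    fix x assume x: "x \<in> lorenz_dom"
    show "min 2 (D 1 y) \<le> f' x"
    proof (cases "x \<in> K")
      case True then show ?thesis using y eq[OF x] by (simp add: min.coboundedI2)
    next
      case False
      then have "(b1 < x \<and> x < 0) \<or> (0 < x \<and> x < b2)" using x \<delta> by (auto simp: K_def lorenz_dom_def)
      then have "2 \<le> f' x" using b1 b2 by auto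
      then show ?thesis by simp
    qed
  qed
qed

theorem mainTheorem8:
  fixes f :: "real \<Rightarrow> real" and r :: nat and a b :: real
  assumes "lorenz_expanding r f"
    and "a < b" and "{a<..<b} \<subseteq> lorenz_dom"
  shows "\<exists>N>0. (\<Union>i\<in>{0..N}. iter_image f i {a<..<b}) = {-1<..<1}"
proof -
  obtain f' where r: "1 \<le> r" and cr: "Cr_on r lorenz_dom f"
    and deriv: "\<And>x. x \<in> lorenz_dom \<Longrightarrow> (f has_real_derivative f' x) (at x within lorenz_dom)"
    and limL: "(f \<longlongrightarrow> 1) (at_left 0)" and fL: "filterlim f' at_top (at_left 0)"
    and limR: "(f \<longlongrightarrow> -1) (at_right 0)" and fR: "filterlim f' at_top (at_right 0)"
    and rng: "\<And>x. x \<in> lorenz_dom \<Longrightarrow> -1 < f x \<and> f x < 1 \<and> f' x > sqrt 2"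
    using assms(1) unfolding lorenz_expanding_def by blast
  obtain \<mu> where mu: "\<mu> > sqrt 2" "\<forall>x\<in>lorenz_dom. f' x \<ge> \<mu>"
    using mu_exists[OF r cr deriv fL fR] rng by blast
  interpret lz f f' \<mu>
    by unfold_locales (use deriv limL limR rng mu in auto)
  have ab: "-1 \<le> a" "b \<le> 1"
  proof -
    show "-1 \<le> a"
    proof (rule ccontr)
      assume "\<not> -1 \<le> a"
      then have "a < min b (-1)" using assms(2) by auto
      then have "(a + min b (-1)) / 2 \<in> {a<..<b}" "(a + min b (-1)) / 2 < -1" by auto
      then show False using assms(3) unfolding lorenz_dom_def by (meson DiffD1 atLeastAtMost_iff linorder_not_less subsetD)
    qed
    show "b \<le> 1"
    proof (rule ccontr)
      assume "\<not> b \<le> 1"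
      then have "max a 1 < b" using assms(2) by auto
      then have "(max a 1 + b) / 2 \<in> {a<..<b}" "(max a 1 + b) / 2 > 1" by auto
      then show False using assms(3) unfolding lorenz_dom_def by (meson DiffD1 atLeastAtMost_iff linorder_not_less subsetD)
    qed
  qed
  obtain N where N: "{-1<..<1} \<subseteq> (\<Union>i\<in>{0..N}. IM a b i)" using main_loc[OF ab(1) assms(2) ab(2)] by blast
  have "(\<Union>i\<in>{0..Suc N}. IM a b i) = {-1<..<1}"
  proof
    show "(\<Union>i\<in>{0..Suc N}. IM a b i) \<subseteq> {-1<..<1}" using IM_sub[OF ab] by blast
    show "{-1<..<1} \<subseteq> (\<Union>i\<in>{0..Suc N}. IM a b i)" using N by fastforce
  qed
  then show ?thesis unfolding IM_def by blast
qed

end
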